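(* Let $O=(O_i)_{i\in\overline{\mathbb V}}\in\mathbb R_+^{\overline{\mathbb V}}$ with $O_i=T_i$ for $i\in\partial\mathbb V$, and let $K=(K_i)_{i\in\overline{\mathbb V}}\in\mathbb N_0^{\overline{\mathbb V}}$. Then for every $t\ge0$, $\mathbb E_O\left(\prod_{i\in\overline{\mathbb V}}O_i(t)^{K_i}\right)=\mathbb E_K\left(\prod_{i\in\overline{\mathbb V}}O_i^{K_i(t)}\right),$ where on the left the expectation is over the opinion process $O(t)$ started from $O$ (with $K$ fixed), and on the right over the absorbed discrete KMP process $K(t)$ started from $K$ (with $O$ fixed).
   Context: Graph: $(\overline{\mathbb V},\overline E)$ is a finite oriented graph; $\overline{\mathbb V}=\mathbb V\cup\partial\mathbb V$ (internal and boundary vertices). $E$ is the set of edges with both endpoints in $\mathbb V$, $\partial E$ the set of edges with one endpoint in $\partial\mathbb V$; no edges join two boundary vertices; every boundary edge is written $ij$ with $i\in\mathbb V$, $j\in\partial\mathbb V$; $\overline E=E\cup\partial E$, at most one edge per pair of vertices. Each $j\in\partial\mathbb V$ carries a fixed value $T_j>0$. $\mathbb N_0=\{0,1,2,\dots\}$. Opinion process: Markov process on $\mathbb R_+^{\overline{\mathbb V}}$ with $O_j\equiv T_j$ for $j\in\partial\mathbb V$ and generator $L^Of(O)=\sum_{ij\in\overline E}\int_0^1dv\,[f(H^O_{ij;v}O)-f(O)]$, where $(H^O_{ij;v}O)_\ell=vO_i+(1-v)O_j$ for $\ell\in\{i,j\}\cap\mathbb V$ and $(H^O_{ij;v}O)_\ell=O_\ell$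 otherwise. Absorbed discrete KMP process: Markov process on $\mathbb N_0^{\overline{\mathbb V}}$ with generator $L^K_0f(\underline k)=\sum_{ij\in E}\frac1{k_i+k_j+1}\sum_{h=0}^{k_i+k_j}[f(H_{ij;h}\underline k)-f(\underline k)]+\sum_{ij\in\partial E}\frac1{k_i+1}\sum_{h=0}^{k_i}[f(H_{ij;h}\underline k)-f(\underline k)]$, where $(H_{ij;h}\underline k)_i=h$, $(H_{ij;h}\underline k)_j=k_i+k_j-h$, and other coordinates unchanged. *)

theory Defs
  imports "HOL-Analysis.Analysis"
begin

text \<open>Vertices have type 'v.  V = internal vertices, BV = boundary vertices.
  Edges are oriented pairs (i,j); E = internal edges, dE = boundary edges (i in V, j in BV).\<close>

definition opinion_update :: "'v set \<Rightarrow> 'v \<times> 'v \<Rightarrow> real \<Rightarrow> ('v \<Rightarrow> real) \<Rightarrow> ('v \<Rightarrow> real)" where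
  "opinion_update V e v Op =
     (\<lambda>l. if l \<in> {fst e, snd e} \<inter> V then v * Op (fst e) + (1 - v) * Op (snd e) else Op l)"

definition opinion_gen :: "'v set \<Rightarrow> ('v \<times> 'v) set \<Rightarrow> (('v \<Rightarrow> real) \<Rightarrow> real) \<Rightarrow> ('v \<Rightarrow> real) \<Rightarrow> real" where
  "opinion_gen V Eb f Op =
     (\<Sum>e\<in>Eb. integral {0..1::real} (\<lambda>v. f (opinion_update V e v Op) - f Op))"

definition kmp_update :: "'v \<times> 'v \<Rightarrow> nat \<Rightarrow> ('v \<Rightarrow> nat) \<Rightarrow> ('v \<Rightarrow> nat)" where
  "kmp_update e h k = k(fst e := h, snd e := k (fst e) + k (snd e) - h)"

definition kmp_gen :: "('v \<times> 'v) set \<Rightarrow> ('v \<times> 'v) set \<Rightarrow> (('v \<Rightarrow> nat) \<Rightarrow> real) \<Rightarrow> ('v \<Rightarrow> nat) \<Rightarrow> real" where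
  "kmp_gen E dE f k =
     (\<Sum>e\<in>E. (1 / real (k (fst e) + k (snd e) + 1)) *
        (\<Sum>h=0..k (fst e) + k (snd e). f (kmp_update e h k) - f k))
   + (\<Sum>e\<in>dE. (1 / real (k (fst e) + 1)) *
        (\<Sum>h=0..k (fst e). f (kmp_update e h k) - f k))"

text \<open>Both processes are pure-jump Markov processes with bounded total jump rate
  (each edge rings at rate 1), so their transition semigroup is e^{tL}:
  E_x f(X(t)) = (e^{tL} f)(x) = \<Sum>n. t^n/n! (L^n f)(x).\<close>
definition semigroup_expect :: "(('s \<Rightarrow> real) \<Rightarrow> ('s \<Rightarrow> real)) \<Rightarrow> real \<Rightarrow> ('s \<Rightarrow> real) \<Rightarrow> 's \<Rightarrow> real" where
  "semigroup_expect L t f x = (\<Sum>n. t ^ n / fact n * (L ^^ n) f x)"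

end

theory Submission
  imports Defs
begin

lemma beta_int:
  fixes a b :: real
  shows "integral {0..1} (\<lambda>v. (v * a + (1 - v) * b)^n) = (\<Sum>h=0..n. a^h * b^(n-h)) / real (n+1)"
proof (cases "a = b")
  case True
  have "(\<Sum>h=0..n. a^h * b^(n-h)) = (\<Sum>h=0..n. b^n)"
    using True by (intro sum.cong) (auto simp: power_add[symmetric])
  then show ?thesis using True by (simp add: field_simps)
next
  case False
  let ?F = "\<lambda>v. (v * a + (1 - v) * b)^(Suc n) / (real (Suc n) * (a-b))"
  have d: "(?F has_vector_derivative (v * a + (1 - v) * b)^n) (at v within {0..1})" for v
  proof -
    have l: "((\<lambda>v. v * a + (1 - v) * b) has_real_derivative (a-b)) (at v within {0..1})"
      by (auto intro!: derivative_eq_intros)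
    have "((\<lambda>v. (v * a + (1 - v) * b)^(Suc n)) has_real_derivative real (Suc n) * ((a-b) * (v * a + (1 - v) * b)^n)) (at v within {0..1})"
      using DERIV_power[OF l, of "Suc n"] by simp
    then have "((\<lambda>v. (v * a + (1 - v) * b)^(Suc n)) has_real_derivative real (Suc n) * (v * a + (1 - v) * b)^n * (a-b)) (at v within {0..1})"
      by (simp add: ac_simps)
    then have "(?F has_real_derivative real (Suc n) * (v * a + (1 - v) * b)^n * (a-b) / (real (Suc n) * (a-b))) (at v within {0..1})"
      by (rule DERIV_cdivide)
    then show ?thesis using False by (simp add: has_real_derivative_iff_has_vector_derivative[symmetric])
  qed
  have "((\<lambda>v. (v * a + (1 - v) * b)^n) has_integral (?F 1 - ?F 0)) {0..1}"
    by (rule fundamental_theorem_of_calculus) (use d in auto)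
  then have I: "integral {0..1} (\<lambda>v. (v * a + (1 - v) * b)^n) = (a^Suc n - b^Suc n) / (real (Suc n) * (a-b))"
    by (simp add: integral_unique diff_divide_distrib)
  have s: "a^Suc n - b^Suc n = (a - b) * (\<Sum>h<Suc n. b^(Suc n - Suc h) * a^h)"
    by (rule power_diff_sumr2)
  have s2: "(\<Sum>h<Suc n. b^(Suc n - Suc h) * a^h) = (\<Sum>h=0..n. a^h * b^(n-h))"
    by (intro sum.cong) (auto simp: atLeast0AtMost lessThan_Suc_atMost)
  have "(a - b) * X / (real (Suc n) * (a - b)) = X / real (Suc n)" for X
    using nonzero_mult_divide_mult_cancel_right[of "a-b" X "real (Suc n)"] False by (simp add: ac_simps)
  then show ?thesis unfolding I s s2 by simp
qed

definition nice :: "'v set \<Rightarrow> (('v \<Rightarrow> real) \<Rightarrow> real) \<Rightarrow> bool" where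
  "nice V f \<longleftrightarrow> (\<forall>e X. (\<lambda>v. f (opinion_update V e v X)) integrable_on {0..1})"

lemma nice_const[intro]: "nice V (\<lambda>X. c)"
  unfolding nice_def by (auto intro: integrable_const_ivl)

lemma nice_add[intro]: "nice V f \<Longrightarrow> nice V g \<Longrightarrow> nice V (\<lambda>X. f X + g X)"
  by (auto simp: nice_def intro!: integrable_add)

lemma nice_diff[intro]: "nice V f \<Longrightarrow> nice V g \<Longrightarrow> nice V (\<lambda>X. f X - g X)"
  by (auto simp: nice_def intro!: integrable_diff)

lemma nice_cmult[intro]: "nice V f \<Longrightarrow> nice V (\<lambda>X. c * f X)"
  by (auto simp: nice_def intro!: integrable_on_mult_right)

lemma nice_sum[intro]: "finite S \<Longrightarrow> (\<And>x. x \<in> S \<Longrightarrow> nice V (f x)) \<Longrightarrow> nice V (\<lambda>X. \<Sum>x\<in>S. f x X)"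
  by (auto simp: nice_def intro!: integrable_sum)

lemma opgen_add:
  assumes "nice V f" "nice V g"
  shows "opinion_gen V Eb (\<lambda>X. f X + g X) X0 = opinion_gen V Eb f X0 + opinion_gen V Eb g X0"
proof -
  have "integral {0..1} (\<lambda>v. f (opinion_update V e v X0) + g (opinion_update V e v X0) - (f X0 + g X0))
     = integral {0..1} (\<lambda>v. f (opinion_update V e v X0) - f X0) + integral {0..1} (\<lambda>v. g (opinion_update V e v X0) - g X0)" for e
  proof -
    have i1: "(\<lambda>v. f (opinion_update V e v X0) - f X0) integrable_on {0..1}"
      using assms(1) unfolding nice_def by (intro integrable_diff integrable_const_ivl) blast
    have i2: "(\<lambda>v. g (opinion_update V e v X0) - g X0) integrable_on {0..1}"
      using assms(2) unfolding nice_def by (intro integrable_diff integrable_const_ivl) blast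
    show ?thesis using integral_add[OF i1 i2] by (simp add: algebra_simps)
  qed
  then show ?thesis unfolding opinion_gen_def by (simp add: sum.distrib)
qed

lemma opgen_diff:
  assumes "nice V f" "nice V g"
  shows "opinion_gen V Eb (\<lambda>X. f X - g X) X0 = opinion_gen V Eb f X0 - opinion_gen V Eb g X0"
proof -
  have "integral {0..1} (\<lambda>v. f (opinion_update V e v X0) - g (opinion_update V e v X0) - (f X0 - g X0))
     = integral {0..1} (\<lambda>v. f (opinion_update V e v X0) - f X0) - integral {0..1} (\<lambda>v. g (opinion_update V e v X0) - g X0)" for e
  proof -
    have i1: "(\<lambda>v. f (opinion_update V e v X0) - f X0) integrable_on {0..1}"
      using assms(1) unfolding nice_def by (intro integrable_diff integrable_const_ivl) blast
    have i2: "(\<lambda>v. g (opinion_update V e v X0) - g X0) integrable_on {0..1}"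
      using assms(2) unfolding nice_def by (intro integrable_diff integrable_const_ivl) blast
    show ?thesis using integral_diff[OF i1 i2] by (simp add: algebra_simps)
  qed
  then show ?thesis unfolding opinion_gen_def by (simp add: sum_subtractf)
qed

lemma opgen_cmult:
  "opinion_gen V Eb (\<lambda>X. c * f X) X0 = c * opinion_gen V Eb f X0"
proof -
  have "integral {0..1} (\<lambda>v. c * f (opinion_update V e v X0) - c * f X0)
     = c * integral {0..1} (\<lambda>v. f (opinion_update V e v X0) - f X0)" for e
    using integral_cmul[where c=c and f="\<lambda>v. f (opinion_update V e v X0) - f X0" and S="{0..1}"]
    by (simp add: algebra_simps)
  then show ?thesis unfolding opinion_gen_def by (simp add: sum_distrib_left)
qed

lemma opgen_sum:
  assumes "finite S" "\<And>x. x \<in> S \<Longrightarrow> nice V (f x)"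
  shows "opinion_gen V Eb (\<lambda>X. \<Sum>x\<in>S. f x X) X0 = (\<Sum>x\<in>S. opinion_gen V Eb (f x) X0)"
  using assms
proof (induction S rule: finite_induct)
  case empty
  then show ?case by (simp add: opinion_gen_def)
next
  case (insert x F)
  have "opinion_gen V Eb (\<lambda>X. \<Sum>x\<in>insert x F. f x X) X0 = opinion_gen V Eb (\<lambda>X. f x X + (\<Sum>x\<in>F. f x X)) X0"
    using insert by simp
  also have "\<dots> = opinion_gen V Eb (f x) X0 + opinion_gen V Eb (\<lambda>X. (\<Sum>x\<in>F. f x X)) X0"
    using insert by (intro opgen_add) auto
  finally show ?case using insert by simp
qed

lemma commute1:
  assumes "finite E" "finite dE" "\<And>K'. nice V (G K')"
  shows "opinion_gen V Eb (\<lambda>X. kmp_gen E dE (\<lambda>K'. G K' X) K) X0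
       = kmp_gen E dE (\<lambda>K'. opinion_gen V Eb (G K') X0) K"
  unfolding kmp_gen_def using assms
  by (simp only: opgen_add opgen_sum opgen_cmult opgen_diff nice_sum nice_cmult nice_diff nice_add finite_atLeastAtMost)

lemma nice_kmp:
  assumes "finite E" "finite dE" "\<And>K'. nice V (G K')"
  shows "nice V (\<lambda>X. kmp_gen E dE (\<lambda>K'. G K' X) K)"
  unfolding kmp_gen_def using assms
  by (intro nice_add nice_sum nice_cmult nice_diff) auto

lemma commuteN:
  assumes "finite E" "finite dE"
  shows "\<And>G K. (\<And>K'. nice V (G K')) \<Longrightarrow> opinion_gen V Eb (\<lambda>X. ((kmp_gen E dE)^^n) (\<lambda>K'. G K' X) K) X0
       = ((kmp_gen E dE)^^n) (\<lambda>K'. opinion_gen V Eb (G K') X0) K"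
proof (induction n)
  case 0
  then show ?case by simp
next
  case (Suc n)
  define G' where "G' = (\<lambda>K'' X. kmp_gen E dE (\<lambda>K'. G K' X) K'')"
  have nG': "nice V (G' K'')" for K''
    unfolding G'_def using assms Suc.prems by (intro nice_kmp) auto
  have "opinion_gen V Eb (\<lambda>X. ((kmp_gen E dE)^^Suc n) (\<lambda>K'. G K' X) K) X0
      = opinion_gen V Eb (\<lambda>X. ((kmp_gen E dE)^^n) (\<lambda>K''. G' K'' X) K) X0"
    unfolding funpow_Suc_right G'_def by (simp add: comp_def)
  also have "\<dots> = ((kmp_gen E dE)^^n) (\<lambda>K''. opinion_gen V Eb (G' K'') X0) K"
    using Suc.IH nG' by blast
  also have "(\<lambda>K''. opinion_gen V Eb (G' K'') X0) = kmp_gen E dE (\<lambda>K'. opinion_gen V Eb (G K') X0)"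
    unfolding G'_def using commute1[OF assms Suc.prems] by auto
  finally show ?case unfolding funpow_Suc_right by (simp add: comp_def)
qed

lemma nice_D: "nice V (\<lambda>X. \<Prod>i\<in>A. X i ^ K i)"
  unfolding nice_def
proof (intro allI)
  fix e X
  have c: "continuous_on {0..1} (\<lambda>v. opinion_update V e v X i)" for i
    by (cases "i \<in> {fst e, snd e} \<inter> V") (auto simp: opinion_update_def intro!: continuous_intros)
  have "continuous_on {0..1} (\<lambda>v. \<Prod>i\<in>A. opinion_update V e v X i ^ K i)"
    by (intro continuous_on_prod continuous_on_power c)
  then show "(\<lambda>v. \<Prod>i\<in>A. opinion_update V e v X i ^ K i) integrable_on {0..1}"
    by (rule integrable_continuous_real)
qed

lemma prod_two:
  assumes "finite A" "i \<in> A" "j \<in> A" "i \<noteq> j"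
  shows "(\<Prod>l\<in>A. f l) = f i * (f j * (\<Prod>l\<in>A-{i}-{j}. f l))"
proof -
  have "(\<Prod>l\<in>A. f l) = f i * (\<Prod>l\<in>A-{i}. f l)" using assms by (simp add: prod.remove)
  also have "(\<Prod>l\<in>A-{i}. f l) = f j * (\<Prod>l\<in>A-{i}-{j}. f l)" using assms by (simp add: prod.remove)
  finally show ?thesis .
qed


lemma int_lin:
  fixes R c a b :: real
  shows "integral {0..1} (\<lambda>v. R * (v * a + (1 - v) * b)^n - c) = R * ((\<Sum>h=0..n. a^h * b^(n-h)) / real (n+1)) - c"
proof -
  have i1: "(\<lambda>v. R * (v * a + (1 - v) * b)^n) integrable_on {0..1}"
    by (intro integrable_continuous_real continuous_intros)
  have i2: "(\<lambda>v::real. c) integrable_on {0..1}" by (rule integrable_const_ivl)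
  have "integral {0..1} (\<lambda>v. R * (v * a + (1 - v) * b)^n - c) = integral {0..1} (\<lambda>v. R * (v * a + (1 - v) * b)^n) - integral {0..1} (\<lambda>v::real. c)"
    by (rule Henstock_Kurzweil_Integration.integral_diff[OF i1 i2])
  also have "integral {0..1} (\<lambda>v. R * (v * a + (1 - v) * b)^n) = R * integral {0..1} (\<lambda>v. (v * a + (1 - v) * b)^n)"
    by (rule integral_mult[symmetric]) (intro integrable_continuous_real continuous_intros)
  moreover have "integral {0..1} (\<lambda>v::real. c) = c" by simp
  ultimately show ?thesis by (simp add: beta_int)
qed

lemma edge_int:
  assumes fin: "finite A" and iA: "i \<in> A" and jA: "j \<in> A" and ij: "i \<noteq> j"
    and iV: "i \<in> V" and jV: "j \<in> V"
  shows "integral {0..1} (\<lambda>v. (\<Prod>l\<in>A. opinion_update V (i,j) v X l ^ K l) - (\<Prod>l\<in>A. X l ^ K l))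
     = 1 / real (K i + K j + 1) * (\<Sum>h=0..K i + K j. (\<Prod>l\<in>A. X l ^ kmp_update (i,j) h K l) - (\<Prod>l\<in>A. X l ^ K l))"
proof -
  define R where "R = (\<Prod>l\<in>A-{i}-{j}. X l ^ K l)"
  define c where "c = (\<Prod>l\<in>A. X l ^ K l)"
  have u: "(\<Prod>l\<in>A. opinion_update V (i,j) v X l ^ K l) = R * (v * X i + (1 - v) * X j)^(K i + K j)" for v
  proof -
    have "(\<Prod>l\<in>A-{i}-{j}. opinion_update V (i,j) v X l ^ K l) = R"
      unfolding R_def by (intro prod.cong) (auto simp: opinion_update_def)
    then show ?thesis using prod_two[OF fin iA jA ij, of "\<lambda>l. opinion_update V (i,j) v X l ^ K l"] iV jV
      by (simp add: opinion_update_def power_add)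
  qed
  have k: "(\<Prod>l\<in>A. X l ^ kmp_update (i,j) h K l) = R * (X i ^ h * X j ^ (K i + K j - h))" for h
  proof -
    have "(\<Prod>l\<in>A-{i}-{j}. X l ^ kmp_update (i,j) h K l) = R"
      unfolding R_def by (intro prod.cong) (auto simp: kmp_update_def)
    then show ?thesis using prod_two[OF fin iA jA ij, of "\<lambda>l. X l ^ kmp_update (i,j) h K l"] ij
      by (simp add: kmp_update_def)
  qed
  show ?thesis
    unfolding u k c_def[symmetric] int_lin
    by (simp add: sum_subtractf sum_distrib_left[symmetric] field_simps)
qed

lemma bedge_int:
  assumes fin: "finite A" and iA: "i \<in> A" and jA: "j \<in> A" and ij: "i \<noteq> j"
    and iV: "i \<in> V" and jV: "j \<notin> V"
  shows "integral {0..1} (\<lambda>v. (\<Prod>l\<in>A. opinion_update V (i,j) v X l ^ K l) - (\<Prod>l\<in>A. X l ^ K l))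
     = 1 / real (K i + 1) * (\<Sum>h=0..K i. (\<Prod>l\<in>A. X l ^ kmp_update (i,j) h K l) - (\<Prod>l\<in>A. X l ^ K l))"
proof -
  define R where "R = (\<Prod>l\<in>A-{i}-{j}. X l ^ K l) * X j ^ K j"
  define c where "c = (\<Prod>l\<in>A. X l ^ K l)"
  have u: "(\<Prod>l\<in>A. opinion_update V (i,j) v X l ^ K l) = R * (v * X i + (1 - v) * X j)^(K i)" for v
  proof -
    have "(\<Prod>l\<in>A-{i}-{j}. opinion_update V (i,j) v X l ^ K l) = (\<Prod>l\<in>A-{i}-{j}. X l ^ K l)"
      by (intro prod.cong) (auto simp: opinion_update_def)
    then show ?thesis using prod_two[OF fin iA jA ij, of "\<lambda>l. opinion_update V (i,j) v X l ^ K l"] iV jV ij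
      by (simp add: opinion_update_def R_def ac_simps)
  qed
  have k: "(\<Prod>l\<in>A. X l ^ kmp_update (i,j) h K l) = R * (X i ^ h * X j ^ (K i - h))" if "h \<le> K i" for h
  proof -
    have "(\<Prod>l\<in>A-{i}-{j}. X l ^ kmp_update (i,j) h K l) = (\<Prod>l\<in>A-{i}-{j}. X l ^ K l)"
      by (intro prod.cong) (auto simp: kmp_update_def)
    moreover have "K i + K j - h = (K i - h) + K j" using that by simp
    ultimately show ?thesis using prod_two[OF fin iA jA ij, of "\<lambda>l. X l ^ kmp_update (i,j) h K l"] ij
      by (simp add: kmp_update_def R_def power_add ac_simps)
  qed
  have ks: "(\<Sum>h=0..K i. (\<Prod>l\<in>A. X l ^ kmp_update (i,j) h K l) - c) = (\<Sum>h=0..K i. R * (X i ^ h * X j ^ (K i - h)) - c)"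
    by (intro sum.cong) (auto simp: k)
  show ?thesis
    unfolding u ks c_def[symmetric] int_lin
    by (simp add: sum_subtractf sum_distrib_left[symmetric] field_simps)
qed

lemma duality1:
  fixes V BV :: "'v set" and E dE :: "('v \<times> 'v) set"
  assumes "finite V" and "finite BV" and "V \<inter> BV = {}"
    and "E \<subseteq> V \<times> V" and "dE \<subseteq> V \<times> BV"
    and "\<forall>(i,j)\<in>E. i \<noteq> j"
  shows "opinion_gen V (E \<union> dE) (\<lambda>X. \<Prod>i\<in>V \<union> BV. X i ^ K i) X0
       = kmp_gen E dE (\<lambda>K'. \<Prod>i\<in>V \<union> BV. X0 i ^ K' i) K"
proof -
  let ?A = "V \<union> BV"
  have fA: "finite ?A" using assms by simp
  have fE: "finite E" using assms(1) assms(4) finite_subset by blast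
  have fdE: "finite dE" using assms(1,2) assms(5) finite_subset by blast
  have disj: "E \<inter> dE = {}" using assms(3,4,5) by blast
  let ?F = "\<lambda>e. integral {0..1} (\<lambda>v. (\<Prod>l\<in>?A. opinion_update V e v X0 l ^ K l) - (\<Prod>l\<in>?A. X0 l ^ K l))"
  have "opinion_gen V (E \<union> dE) (\<lambda>X. \<Prod>i\<in>?A. X i ^ K i) X0 = sum ?F E + sum ?F dE"
    unfolding opinion_gen_def using fE fdE disj by (simp add: sum.union_disjoint)
  also have "sum ?F E = (\<Sum>e\<in>E. (1 / real (K (fst e) + K (snd e) + 1)) *
        (\<Sum>h=0..K (fst e) + K (snd e). (\<Prod>l\<in>?A. X0 l ^ kmp_update e h K l) - (\<Prod>l\<in>?A. X0 l ^ K l)))"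
  proof (intro sum.cong refl)
    fix e assume "e \<in> E"
    then obtain i j where e: "e = (i,j)" "i \<in> V" "j \<in> V" "i \<noteq> j" using assms(4,6) by blast
    show "?F e = (1 / real (K (fst e) + K (snd e) + 1)) *
        (\<Sum>h=0..K (fst e) + K (snd e). (\<Prod>l\<in>?A. X0 l ^ kmp_update e h K l) - (\<Prod>l\<in>?A. X0 l ^ K l))"
      unfolding e(1) fst_conv snd_conv using e by (intro edge_int fA) auto
  qed
  also have "sum ?F dE = (\<Sum>e\<in>dE. (1 / real (K (fst e) + 1)) *
        (\<Sum>h=0..K (fst e). (\<Prod>l\<in>?A. X0 l ^ kmp_update e h K l) - (\<Prod>l\<in>?A. X0 l ^ K l)))"
  proof (intro sum.cong refl)
    fix e assume "e \<in> dE"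
    then obtain i j where e: "e = (i,j)" "i \<in> V" "j \<in> BV" "j \<notin> V" "i \<noteq> j" using assms(3,5) by blast
    show "?F e = (1 / real (K (fst e) + 1)) *
        (\<Sum>h=0..K (fst e). (\<Prod>l\<in>?A. X0 l ^ kmp_update e h K l) - (\<Prod>l\<in>?A. X0 l ^ K l))"
      unfolding e(1) fst_conv snd_conv using e by (intro bedge_int fA) auto
  qed
  finally show ?thesis unfolding kmp_gen_def .
qed

theorem mainTheorem6:
  fixes V BV :: "'v set" and E dE :: "('v \<times> 'v) set"
    and T Op :: "'v \<Rightarrow> real" and K :: "'v \<Rightarrow> nat" and t :: real
  assumes "finite V" and "finite BV" and "V \<inter> BV = {}"
    and "E \<subseteq> V \<times> V" and "dE \<subseteq> V \<times> BV"
    and "\<forall>(i,j)\<in>E. i \<noteq> j"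
    and "\<forall>(i,j)\<in>E. (j,i) \<notin> E"
    and "\<forall>j\<in>BV. T j > 0"
    and "\<forall>i\<in>V \<union> BV. Op i \<ge> 0"
    and "\<forall>j\<in>BV. Op j = T j"
    and "t \<ge> 0"
  shows "semigroup_expect (opinion_gen V (E \<union> dE)) t (\<lambda>Op'. \<Prod>i\<in>V \<union> BV. Op' i ^ K i) Op
       = semigroup_expect (kmp_gen E dE) t (\<lambda>K'. \<Prod>i\<in>V \<union> BV. Op i ^ K' i) K"
proof -
  let ?LO = "opinion_gen V (E \<union> dE)"
  let ?LK = "kmp_gen E dE"
  let ?D = "\<lambda>X K. \<Prod>i\<in>V \<union> BV. X i ^ K i"
  have fE: "finite E" using assms(1) assms(4) finite_subset by blast
  have fdE: "finite dE" using assms(1,2) assms(5) finite_subset by blast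
  have key: "\<And>K. (?LO ^^ n) (\<lambda>X. ?D X K) = (\<lambda>X0. (?LK ^^ n) (\<lambda>K'. ?D X0 K') K)" for n
  proof (induction n)
    case 0
    then show ?case by simp
  next
    case (Suc n)
    show ?case
    proof
      fix X0
      have "(?LO ^^ Suc n) (\<lambda>X. ?D X K) X0 = ?LO (\<lambda>X. (?LK ^^ n) (\<lambda>K'. ?D X K') K) X0"
        using Suc.IH by simp
      also have "\<dots> = (?LK ^^ n) (\<lambda>K'. ?LO (\<lambda>X. ?D X K') X0) K"
        by (rule commuteN[OF fE fdE]) (rule nice_D)
      also have "(\<lambda>K'. ?LO (\<lambda>X. ?D X K') X0) = ?LK (\<lambda>K'. ?D X0 K')"
        using duality1[OF assms(1-6)] by blast
      finally show "(?LO ^^ Suc n) (\<lambda>X. ?D X K) X0 = (?LK ^^ Suc n) (\<lambda>K'. ?D X0 K') K"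
        unfolding funpow_Suc_right by simp
    qed
  qed
  show ?thesis unfolding semigroup_expect_def key by simp
qed

end
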